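(* Let $q\ge2$ be an integer and define $F(y)=\ln\!\Big(\frac{(1-y)^q+(1+y)^q}{2}\Big)$ for $y\in[0,1]$, and $G(z)=\ln F(e^z)$ for $z\in(-\infty,0]$. Then $G$ is concave on $(-\infty,0]$. Consequently, for all $0\le\epsilon\le\tfrac12$ and all $0<x\le1$, \[ F\big((1-2\epsilon)x\big)\cdot F(1) ~\le~ F(1-2\epsilon)\cdot F(x). \]
   Context: Note $F(y)>0$ for $0<y\le1$, so $G$ is well defined on $(-\infty,0]$. *)

theory Defs
  imports "HOL-Analysis.Analysis"
begin

definition F :: "nat \<Rightarrow> real \<Rightarrow> real" where
  "F q y = ln (((1 - y) ^ q + (1 + y) ^ q) / 2)"

definition G :: "nat \<Rightarrow> real \<Rightarrow> real" where
  "G q z = ln (F q (exp z))"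

end

theory Submission
  imports Defs
begin

definition PP :: "nat \<Rightarrow> real \<Rightarrow> real" where
  "PP n y = ((1-y)^(Suc n) + (1+y)^(Suc n))/2"
definition D1 :: "nat \<Rightarrow> real \<Rightarrow> real" where
  "D1 n y = real (Suc n) * ((1+y)^n - (1-y)^n)/2"
definition D2 :: "nat \<Rightarrow> real \<Rightarrow> real" where
  "D2 n y = real (Suc n) * real n * ((1+y)^(n-1) + (1-y)^(n-1))/2"
definition hh :: "nat \<Rightarrow> real \<Rightarrow> real" where
  "hh n y = y * D1 n y / PP n y"
definition hh' :: "nat \<Rightarrow> real \<Rightarrow> real" where
  "hh' n y = ((D1 n y + y * D2 n y) * PP n y - y * D1 n y * D1 n y) / (PP n y)^2"

lemma PP_deriv: "(PP n has_real_derivative D1 n y) (at y)"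
  unfolding PP_def D1_def
  by (auto intro!: derivative_eq_intros simp del: power_Suc of_nat_Suc simp: field_simps)

lemma D1_deriv: "(D1 n has_real_derivative D2 n y) (at y)"
  unfolding D2_def D1_def
  by (auto intro!: derivative_eq_intros simp del: power_Suc of_nat_Suc simp: field_simps)

lemma hh_deriv: assumes "PP n y \<noteq> 0" shows "(hh n has_real_derivative hh' n y) (at y)"
  unfolding hh_def hh'_def
  by (auto intro!: derivative_eq_intros PP_deriv D1_deriv simp: assms power2_eq_square algebra_simps)

lemma D1_pos: assumes "n \<ge> 1" "0 < y" "y \<le> 1" shows "D1 n y > 0"
proof -
  have "(1-y)^n < (1+y)^n" using assms by (intro power_strict_mono) auto
  then show ?thesis unfolding D1_def by simp
qed

lemma D1_nonneg: assumes "0 \<le> y" "y \<le> 1" shows "D1 n y \<ge> 0"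
proof -
  have "(1-y)^n \<le> (1+y)^n" using assms by (intro power_mono) auto
  then show ?thesis unfolding D1_def by simp
qed

lemma PP0: "PP n 0 = 1" unfolding PP_def by simp

lemma PP_gt1: assumes "n \<ge> 1" "0 < y" "y \<le> 1" shows "PP n y > 1"
proof -
  have "PP n 0 < PP n y"
  proof (rule DERIV_pos_imp_increasing_open[of 0 y])
    show "\<And>x. 0 < x \<Longrightarrow> x < y \<Longrightarrow> \<exists>d. (PP n has_real_derivative d) (at x) \<and> 0 < d"
      using PP_deriv D1_pos assms by (meson less_le_trans less_imp_le)
    show "continuous_on {0..y} (PP n)"
      using PP_deriv by (meson DERIV_isCont continuous_at_imp_continuous_on)
  qed (use assms in auto)
  then show ?thesis by (simp add: PP0)
qed

lemma PP_ge1: assumes "n \<ge> 1" "0 \<le> y" "y \<le> 1" shows "PP n y \<ge> 1"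
  using PP_gt1[OF assms(1) _ assms(3)] assms(2) PP0[of n]
  by (cases "y = 0") auto

lemma F_eq: "F (Suc n) y = ln (PP n y)"
  unfolding F_def PP_def by simp

lemma lnPP_deriv: assumes "PP n y > 0"
  shows "((\<lambda>t. ln (PP n t)) has_real_derivative D1 n y / PP n y) (at y)"
  by (auto intro!: derivative_eq_intros PP_deriv simp: assms)

lemma ident_poly:
  fixes a b y n :: real
  shows "(1+y)*(1-y)*(a-b)*((1+y)*a+(1-y)*b - (n+1)*y*(a-b)) + n*y*(a*(1-y)+b*(1+y))*((1+y)*a+(1-y)*b)
       = (1+y)*(1-y)*(a-b)*(a+b) + 4*n*y*a*b"
  by (simp add: algebra_simps power2_eq_square)

lemma ident:
  fixes a b y n :: real
  assumes y: "0 < y" "y < 1" and ab: "0 < b" "b < a" and nn: "n \<ge> 0"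
  shows "y * ((((n+1)*(a-b)/2 + y*((n+1)*n*(a/(1+y) + b/(1-y))/2))*(((1-y)*b + (1+y)*a)/2)
             - y*((n+1)*(a-b)/2)*((n+1)*(a-b)/2))/(((1-y)*b + (1+y)*a)/2)^2)
         / (y * ((n+1)*(a-b)/2) / (((1-y)*b + (1+y)*a)/2))
       = (a+b)/((1+y)*a+(1-y)*b) * (1 + n*(4*y*a*b)/((1+y)*(1-y)*(a^2-b^2)))"
proof -
  define A where "A = 1 + y"
  define B where "B = 1 - y"
  have A: "A > 0" and B: "B > 0" using y by (auto simp: A_def B_def)
  have S: "A*a + B*b > 0" using A B ab by (simp add: add_pos_pos)
  have d: "a - b > 0" using ab by simp
  have d2': "a^2 - b^2 = (a-b)*(a+b)" by (simp add: algebra_simps power2_eq_square)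
  have key: "A*B*(a-b)*(A*a+B*b - (n+1)*y*(a-b)) + n*y*(a*B+b*A)*(A*a+B*b)
       = A*B*(a-b)*(a+b) + 4*n*y*a*b"
    using ident_poly[of y a b n] by (simp add: A_def B_def)
  have gen: "\<And>p d1 d2. p \<noteq> 0 \<Longrightarrow> d1 \<noteq> 0 \<Longrightarrow> y * (((d1 + y*d2)*p - y*d1*d1)/p^2) / (y*d1/p)
      = 1 + y*d2/d1 - y*d1/p"
    using y by (simp add: field_simps power2_eq_square)
  have np: "n + 1 > 0" using nn by simp
  have g1: "\<And>c e X. c \<noteq> 0 \<Longrightarrow> e \<noteq> 0 \<Longrightarrow> y*(c*n*X/2)/(c*e/2) = n*y*X/e"
    by (simp add: field_simps)
  have g2: "a/A + b/B = (a*B+b*A)/(A*B)" using A B by (simp add: field_simps)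
  have e1: "y*((n+1)*n*(a/A + b/B)/2) / ((n+1)*(a-b)/2) = n*y*(a*B+b*A)/(A*B*(a-b))"
    unfolding g2 using g1[of "n+1" "a-b" "(a*B+b*A)/(A*B)"] np d by simp
  have e2: "y*((n+1)*(a-b)/2) / ((B*b + A*a)/2) = (n+1)*y*(a-b)/(A*a+B*b)"
    using S by (simp add: field_simps)
  have e3: "1 + n*y*(a*B+b*A)/(A*B*(a-b)) - (n+1)*y*(a-b)/(A*a+B*b)
     = (A*B*(a-b)*(A*a+B*b - (n+1)*y*(a-b)) + n*y*(a*B+b*A)*(A*a+B*b)) / (A*B*(a-b)*(A*a+B*b))"
    using A B S d by (simp add: field_simps)
  have L: "y * ((((n+1)*(a-b)/2 + y*((n+1)*n*(a/A + b/B)/2))*((B*b + A*a)/2)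
             - y*((n+1)*(a-b)/2)*((n+1)*(a-b)/2))/((B*b + A*a)/2)^2)
         / (y * ((n+1)*(a-b)/2) / ((B*b + A*a)/2))
         = (A*B*(a-b)*(A*a+B*b - (n+1)*y*(a-b)) + n*y*(a*B+b*A)*(A*a+B*b)) / (A*B*(a-b)*(A*a+B*b))"
    apply (subst gen)
    using S np d e1 e2 e3 by auto
  have R: "(a+b)/(A*a+B*b) * (1 + n*(4*y*a*b)/(A*B*(a^2-b^2)))
         = (A*B*(a-b)*(a+b) + 4*n*y*a*b) / (A*B*(a-b)*(A*a+B*b))"
  proof -
    have g3: "\<And>u1 v1 w1. u1 \<noteq> 0 \<Longrightarrow> v1 \<noteq> 0 \<Longrightarrow> w1 \<noteq> 0 \<Longrightarrow>
       v1/w1 * (1 + n*(4*y*a*b)/(A*B*(u1 * v1))) = (A*B*u1 * v1 + 4*n*y*a*b)/(A*B*u1*w1)"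
      using A B by (simp add: field_simps)
    show ?thesis unfolding d2' using g3[of "a-b" "a+b" "A*a+B*b"] S d ab by simp
  qed
  show ?thesis using L R key by (simp add: A_def B_def)
qed

definition DD :: "nat \<Rightarrow> real \<Rightarrow> real" where
  "DD n r = (\<Sum>k<n. (r^2)^k) / r^(n-1)"

definition CC :: "nat \<Rightarrow> real \<Rightarrow> real" where
  "CC n y = (1 + ((1-y)/(1+y))^n)/((1 + ((1-y)/(1+y))^n) + y*(1 - ((1-y)/(1+y))^n))
           * (1 + real n / DD n ((1-y)/(1+y)))"

lemma E_eq: assumes n: "n \<ge> 1" and y: "0 < y" "y < 1"
  shows "y * hh' n y / hh n y = CC n y"
proof -
  define a where "a = (1+y)^n"
  define b where "b = (1-y)^n"
  define A where "A = 1 + y"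
  define B where "B = 1 - y"
  define r where "r = (1-y)/(1+y)"
  define \<rho> where "\<rho> = r^n"
  have A: "A > 0" and B: "B > 0" using y by (auto simp: A_def B_def)
  have b0: "b > 0" unfolding b_def using y by simp
  have ba: "b < a" unfolding a_def b_def using y n by (intro power_strict_mono) auto
  obtain m where m: "n = Suc m" using n by (cases n) auto
  have pa: "(1+y)^(n-1) = a/(1+y)" unfolding a_def m using y by simp
  have pb: "(1-y)^(n-1) = b/(1-y)" unfolding b_def m using y by simp
  have PPe: "PP n y = ((1-y)*b + (1+y)*a)/2" unfolding PP_def a_def b_def by (simp add: algebra_simps)
  have D1e: "D1 n y = (real n+1)*(a-b)/2" unfolding D1_def a_def b_def by simp
  have D2e: "D2 n y = (real n+1)*real n*(a/(1+y) + b/(1-y))/2" unfolding D2_def pa pb by simp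
  have step1: "y * hh' n y / hh n y = (a+b)/((1+y)*a+(1-y)*b) * (1 + real n*(4*y*a*b)/((1+y)*(1-y)*(a^2-b^2)))"
    unfolding hh'_def hh_def PPe D1e D2e using ident[OF y b0 ba, of "real n"] by simp
  have r0: "r > 0" and r1: "r < 1" unfolding r_def using y by auto
  have bra: "b = \<rho> * a" unfolding \<rho>_def r_def a_def b_def using y by (simp add: power_divide)
  have a0: "a > 0" using b0 ba by simp
  have p1: "(a+b)/((1+y)*a+(1-y)*b) = (1+\<rho>)/((1+\<rho>) + y*(1-\<rho>))"
  proof -
    have "a+b = a*(1+\<rho>)" "(1+y)*a+(1-y)*b = a*((1+\<rho>)+y*(1-\<rho>))" unfolding bra by (simp_all add: algebra_simps)
    then show ?thesis using a0 by simp
  qed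
  define S where "S = (\<Sum>k<n. (r^2)^k)"
  have S0: "S > 0" unfolding S_def using m r0 by (intro sum_pos) auto
  have Sg: "1 - \<rho>^2 = (1 - r^2) * S" unfolding S_def \<rho>_def
    by (metis one_diff_power_eq power_mult power_mult_distrib mult.commute)
  have rn: "\<rho> = r * r^(n-1)" unfolding \<rho>_def m by simp
  have yy: "1 + y \<noteq> 0" using y by simp
  have rr: "1 - r^2 = 4*y/(1+y)^2" unfolding r_def using yy
    by (simp add: power_divide divide_simps) (simp add: algebra_simps power2_eq_square)
  have key4: "4*y*r = A*B*(1-r^2)" unfolding rr unfolding r_def A_def B_def
  proof -
    have "(1+y)*(1-y)*(4*y/((1+y)*(1+y))) = 4*y*((1-y)/(1+y))" using yy by (simp add: divide_simps)
    then show "4*y*((1-y)/(1+y)) = (1+y)*(1-y)*(4*y/(1+y)^2)" by (simp add: power2_eq_square)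
  qed
  have r2: "1 - r^2 > 0" using r0 r1 by (simp add: power_less_one_iff)
  have rp: "r^(n-1) > 0" using r0 by simp
  have p2: "real n*(4*y*a*b)/((1+y)*(1-y)*(a^2-b^2)) = real n / DD n r"
  proof -
    have "4*y*a*b/((1+y)*(1-y)*(a^2-b^2)) = 4*y*\<rho>/(A*B*(1-\<rho>^2))"
    proof -
      have e1: "4*y*a*b = a^2*(4*y*\<rho>)" and e2: "(1+y)*(1-y)*(a^2-b^2) = a^2*(A*B*(1-\<rho>^2))"
        unfolding bra A_def B_def by (simp_all add: algebra_simps power2_eq_square)
      show ?thesis unfolding e1 e2 using a0 by (simp only: mult_divide_mult_cancel_left_if) simp
    qed
    also have "\<dots> = (4*y*r) * r^(n-1) / (A*B*(1-r^2)*S)" proof -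
      have "4*y*\<rho> = (4*y*r)*r^(n-1)" unfolding rn by (simp add: algebra_simps)
      then show ?thesis by (simp only: Sg mult.assoc)
    qed
    also have "\<dots> = r^(n-1) / S" unfolding key4 using A B r2 S0 by (simp add: field_simps)
    also have "\<dots> = 1 / DD n r" unfolding DD_def S_def by simp
    finally show ?thesis by (metis times_divide_eq_right mult.right_neutral)
  qed
  show ?thesis unfolding step1 p1 p2 CC_def \<rho>_def r_def by simp
qed

lemma DD_cosh: assumes r: "r > 0" and n: "n \<ge> 1"
  shows "DD n r = (\<Sum>k<n. cosh ((real n - 1 - 2*real k) * ln r))"
proof -
  define L where "L = ln r"
  have rL: "r = exp L" unfolding L_def using r by simp
  define f where "f k = exp ((real n - 1 - 2*real k) * L)" for k
  have t: "(r^2)^k / r^(n-1) = f (n - Suc k)" if "k < n" for k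
  proof -
    have "(r^2)^k / r^(n-1) = exp (real (2*k) * L) / exp (real (n-1) * L)"
      unfolding rL by (simp only: power_mult[symmetric] exp_of_nat_mult)
    also have "\<dots> = exp ((real (2*k) - real (n-1)) * L)" by (simp add: exp_diff left_diff_distrib)
    also have "\<dots> = f (n - Suc k)" unfolding f_def using that n
      by (simp add: of_nat_diff algebra_simps)
    finally show ?thesis .
  qed
  have X: "DD n r = (\<Sum>k<n. f k)"
  proof -
    have "DD n r = (\<Sum>k<n. (r^2)^k / r^(n-1))" unfolding DD_def by (simp add: sum_divide_distrib)
    also have "\<dots> = (\<Sum>k<n. f (n - Suc k))" using t by (intro sum.cong) auto
    also have "\<dots> = (\<Sum>k<n. f k)" by (rule sum.nat_diff_reindex)
    finally show ?thesis .
  qed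
  have Y: "DD n r = (\<Sum>k<n. exp (- ((real n - 1 - 2*real k) * L)))"
  proof -
    have "DD n r = (\<Sum>k<n. (r^2)^k / r^(n-1))" unfolding DD_def by (simp add: sum_divide_distrib)
    also have "\<dots> = (\<Sum>k<n. exp (- ((real n - 1 - 2*real k) * L)))"
    proof (intro sum.cong refl)
      fix k assume "k \<in> {..<n}"
      then have "(r^2)^k / r^(n-1) = f (n - Suc k)" using t by auto
      also have "\<dots> = exp (- ((real n - 1 - 2*real k) * L))" unfolding f_def using \<open>k \<in> {..<n}\<close>
        by (simp add: of_nat_diff algebra_simps)
      finally show "(r^2)^k / r^(n-1) = exp (- ((real n - 1 - 2*real k) * L))" .
    qed
    finally show ?thesis .
  qed
  have "(\<Sum>k<n. cosh ((real n - 1 - 2*real k) * L)) = ((\<Sum>k<n. f k) + (\<Sum>k<n. exp (- ((real n - 1 - 2*real k) * L))))/2"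
    by (simp only: cosh_field_def f_def sum_divide_distrib[symmetric] sum.distrib)
  then show ?thesis using X Y by (simp add: L_def)
qed

lemma DD_pos: assumes "r > 0" "n \<ge> 1" shows "DD n r > 0"
  unfolding DD_def using assms by (intro divide_pos_pos sum_pos) (auto simp: lessThan_empty_iff)

lemma DD_mono: assumes "0 < r2" "r2 \<le> r1" "r1 \<le> 1" "n \<ge> 1"
  shows "DD n r1 \<le> DD n r2"
proof -
  have L: "ln r2 \<le> ln r1" "ln r1 \<le> 0" using assms by auto
  have r1: "r1 > 0" using assms by simp
  show ?thesis unfolding DD_cosh[OF \<open>0<r2\<close> \<open>n\<ge>1\<close>] DD_cosh[OF r1 \<open>n\<ge>1\<close>]
  proof (intro sum_mono)
    fix k
    define m where "m = real n - 1 - 2*real k"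
    have "\<bar>m * ln r1\<bar> \<le> \<bar>m * ln r2\<bar>" using L by (simp add: abs_mult mult_left_mono)
    then have "cosh \<bar>m * ln r1\<bar> \<le> cosh \<bar>m * ln r2\<bar>" by (metis cosh_real_nonneg_le_iff abs_ge_zero)
    then show "cosh ((real n - 1 - 2*real k) * ln r1) \<le> cosh ((real n - 1 - 2*real k) * ln r2)"
      unfolding m_def by simp
  qed
qed

lemma CC_mono: assumes n: "n \<ge> 1" and y: "0 < y1" "y1 \<le> y2" "y2 < 1"
  shows "CC n y2 \<le> CC n y1"
proof -
  define r1 where "r1 = (1-y1)/(1+y1)"
  define r2 where "r2 = (1-y2)/(1+y2)"
  have r2p: "r2 > 0" unfolding r2_def using y by simp
  have r21: "r2 \<le> r1" unfolding r1_def r2_def using y by (simp add: frac_le divide_simps) (simp add: algebra_simps)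
  have r1l: "r1 \<le> 1" unfolding r1_def using y by simp
  define p1 where "p1 = r1^n"
  define p2 where "p2 = r2^n"
  have p2p: "p2 \<ge> 0" unfolding p2_def using r2p by simp
  have p21: "p2 \<le> p1" unfolding p1_def p2_def using r2p r21 by (intro power_mono) auto
  have p1l: "p1 \<le> 1" unfolding p1_def using r1l r21 r2p by (simp add: power_le_one)
  have f1: "(1+p2)/((1+p2) + y2*(1-p2)) \<le> (1+p1)/((1+p1) + y1*(1-p1))"
  proof -
    have "y1*(1-p1) \<ge> 0" "y2*(1-p2) \<ge> 0" using y p1l p21 by simp_all
    then have d1: "(1+p1) + y1*(1-p1) > 0" and d2: "(1+p2) + y2*(1-p2) > 0" using p2p p21 by linarith+
    have a: "(1-p1)*(1+p2) \<le> (1-p2)*(1+p1)" using p21 by (simp add: algebra_simps)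
    have "y1*((1-p1)*(1+p2)) \<le> y2*((1-p2)*(1+p1))"
    proof (rule mult_mono)
      show "0 \<le> (1-p1)*(1+p2)" using p1l p2p by simp
    qed (use a y in auto)
    then have "(1+p2)*((1+p1) + y1*(1-p1)) \<le> (1+p1)*((1+p2) + y2*(1-p2))"
      by (simp add: algebra_simps)
    then show ?thesis using d1 d2 by (simp add: divide_simps mult.commute)
  qed
  have f2: "1 + real n / DD n r2 \<le> 1 + real n / DD n r1"
  proof -
    have "DD n r1 \<le> DD n r2" using DD_mono[OF r2p r21 r1l n] .
    moreover have "DD n r1 > 0" using DD_pos[of r1 n] r2p r21 n by simp
    ultimately show ?thesis by (simp add: frac_le)
  qed
  have f1p: "(1+p2)/((1+p2) + y2*(1-p2)) \<ge> 0" using p2p p1l p21 y by simp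
  have f2p: "1 + real n / DD n r2 \<ge> 0" using DD_pos[of r2 n] r2p n by simp
  have f1p': "(1+p1)/((1+p1) + y1*(1-p1)) \<ge> 0" using p2p p1l p21 y by simp
  have "CC n y2 = (1+p2)/((1+p2) + y2*(1-p2)) * (1 + real n / DD n r2)"
    unfolding CC_def p2_def r2_def by simp
  also have "\<dots> \<le> (1+p1)/((1+p1) + y1*(1-p1)) * (1 + real n / DD n r1)"
    using f1 f2 f1p' f2p by (rule mult_mono)
  also have "\<dots> = CC n y1" unfolding CC_def p1_def r1_def by simp
  finally show ?thesis .
qed

lemma hh_pos: assumes "n \<ge> 1" "0 < y" "y \<le> 1" shows "hh n y > 0"
  unfolding hh_def using D1_pos[OF assms] PP_gt1[OF assms] assms by simp

lemma hh_ge: assumes n: "n \<ge> 1" and y: "0 < y" "y < 1"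
  shows "ln (PP n y) * CC n y \<le> hh n y"
proof -
  have PPp: "PP n z > 0" if "0 \<le> z" "z \<le> 1" for z using PP_ge1[OF n that] by simp
  have "\<exists>c. 0 < c \<and> c < y \<and> (hh n y - hh n 0) * (D1 n c / PP n c)
          = (ln (PP n y) - ln (PP n 0)) * hh' n c"
  proof (rule GMVT')
    show "isCont (hh n) z" if "0 \<le> z" "z \<le> y" for z
      using hh_deriv[of n z] PPp[of z] that y by (intro DERIV_isCont) auto
    show "isCont (\<lambda>t. ln (PP n t)) z" if "0 \<le> z" "z \<le> y" for z
      using lnPP_deriv[of n z] PPp[of z] that y by (intro DERIV_isCont) auto
    show "((\<lambda>t. ln (PP n t)) has_real_derivative D1 n z / PP n z) (at z)" if "0 < z" "z < y" for z
      using lnPP_deriv[of n z] PPp[of z] that y by auto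
    show "(hh n has_real_derivative hh' n z) (at z)" if "0 < z" "z < y" for z
      using hh_deriv[of n z] PPp[of z] that y by auto
  qed (use y in auto)
  then obtain c where c: "0 < c" "c < y"
    and eq: "(hh n y - hh n 0) * (D1 n c / PP n c) = (ln (PP n y) - ln (PP n 0)) * hh' n c" by blast
  have h0: "hh n 0 = 0" unfolding hh_def by simp
  have hc: "hh n c > 0" using hh_pos[OF n c(1)] c y by simp
  have dc: "D1 n c / PP n c = hh n c / c" unfolding hh_def using c by simp
  have eq2: "hh n y * hh n c = ln (PP n y) * (c * hh' n c)"
    using eq c unfolding h0 dc by (simp add: PP0 field_simps)
  have "hh n y = ln (PP n y) * (c * hh' n c / hh n c)"
    using eq2 hc by (simp add: field_simps)
  also have "c * hh' n c / hh n c = CC n c" using E_eq[OF n c(1)] c y by simp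
  finally have hy: "hh n y = ln (PP n y) * CC n c" .
  have "CC n y \<le> CC n c" using CC_mono[OF n c(1)] c y by simp
  moreover have "ln (PP n y) > 0" using PP_gt1[OF n y(1)] y by simp
  ultimately show ?thesis unfolding hy by (simp add: mult_left_mono)
qed

definition phi :: "nat \<Rightarrow> real \<Rightarrow> real" where
  "phi n y = hh n y / ln (PP n y)"

lemma phi_deriv: assumes n: "n \<ge> 1" and y: "0 < y" "y \<le> 1"
  shows "(phi n has_real_derivative
     (hh' n y * ln (PP n y) - hh n y * (D1 n y / PP n y)) / (ln (PP n y))^2) (at y)"
proof -
  have P1: "PP n y > 1" using PP_gt1[OF n y] .
  have "((\<lambda>t. hh n t / ln (PP n t)) has_real_derivative
     (hh' n y * ln (PP n y) - hh n y * (D1 n y / PP n y)) / (ln (PP n y) * ln (PP n y))) (at y)"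
    using P1 by (intro DERIV_divide hh_deriv lnPP_deriv) auto
  then show ?thesis unfolding phi_def[abs_def] by (simp add: power2_eq_square)
qed

lemma phi_deriv_nonpos: assumes n: "n \<ge> 1" and y: "0 < y" "y < 1"
  shows "(hh' n y * ln (PP n y) - hh n y * (D1 n y / PP n y)) / (ln (PP n y))^2 \<le> 0"
proof -
  have L: "ln (PP n y) > 0" using PP_gt1[OF n y(1)] y by simp
  have h: "hh n y > 0" using hh_pos[OF n y(1)] y by simp
  have dc: "D1 n y / PP n y = hh n y / y" unfolding hh_def using y by simp
  have "ln (PP n y) * (y * hh' n y / hh n y) \<le> hh n y" using hh_ge[OF n y] E_eq[OF n y] by simp
  then have "ln (PP n y) * (y * hh' n y) \<le> hh n y * hh n y" using h by (simp add: field_simps)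
  then have "hh' n y * ln (PP n y) \<le> hh n y * (hh n y / y)" using y by (simp add: field_simps)
  then show ?thesis unfolding dc using L by (intro divide_nonpos_pos) auto
qed

lemma phi_mono: assumes n: "n \<ge> 1" and uv: "0 < u" "u \<le> v" "v \<le> 1"
  shows "phi n v \<le> phi n u"
proof (rule DERIV_nonpos_imp_decreasing_open[OF uv(2)])
  show "\<exists>d. (phi n has_real_derivative d) (at x) \<and> d \<le> 0" if "u < x" "x < v" for x
    using phi_deriv[OF n, of x] phi_deriv_nonpos[OF n, of x] that uv by auto
  show "continuous_on {u..v} (phi n)"
  proof (intro continuous_at_imp_continuous_on ballI)
    fix x assume "x \<in> {u..v}"
    then have "0 < x" "x \<le> 1" using uv by auto
    from phi_deriv[OF n this] show "isCont (phi n) x" by (rule DERIV_isCont)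
  qed
qed

lemma G_eq: "G (Suc n) = (\<lambda>z. ln (ln (PP n (exp z))))"
  by (auto simp: G_def F_eq)

lemma G_deriv: assumes n: "n \<ge> 1" and z: "z \<le> 0"
  shows "(G (Suc n) has_real_derivative phi n (exp z)) (at z)"
proof -
  have y: "0 < exp z" "exp z \<le> 1" using z by auto
  have P1: "PP n (exp z) > 1" using PP_gt1[OF n y] .
  have "((\<lambda>z. ln (ln (PP n (exp z)))) has_real_derivative
      (1 / ln (PP n (exp z))) * ((D1 n (exp z) / PP n (exp z)) * exp z)) (at z)"
    using P1
    by (intro DERIV_chain2[of ln] DERIV_ln_divide[THEN DERIV_cong] DERIV_chain2[of "\<lambda>t. ln (PP n t)"]
        lnPP_deriv DERIV_exp) auto
  moreover have "(1 / ln (PP n (exp z))) * ((D1 n (exp z) / PP n (exp z)) * exp z) = phi n (exp z)"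
    unfolding phi_def hh_def by (simp add: ac_simps)
  ultimately show ?thesis unfolding G_eq by simp
qed

lemma G_concave: assumes n: "n \<ge> 1" shows "concave_on {..0} (G (Suc n))"
  unfolding concave_on_def
proof (rule convex_on_realI[where f' = "\<lambda>z. - phi n (exp z)"])
  show "connected {..0::real}" by simp
  show "((\<lambda>x. - G (Suc n) x) has_real_derivative - phi n (exp x)) (at x)" if "x \<in> {..0}" for x
    using G_deriv[OF n, of x] that by (auto intro: DERIV_minus)
  show "- phi n (exp x) \<le> - phi n (exp y)" if "x \<in> {..0}" "y \<in> {..0}" "x \<le> y" for x y
    using phi_mono[OF n, of "exp x" "exp y"] that by simp
qed

lemma F_pos: assumes n: "n \<ge> 1" "0 < y" "y \<le> 1" shows "F (Suc n) y > 0"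
  unfolding F_eq using PP_gt1[OF n] by simp

lemma G_superadd: fixes a b :: real and g :: "real \<Rightarrow> real" assumes c: "concave_on {..0} g" and a: "a \<le> 0" and b: "b \<le> 0"
  shows "g (a+b) + g 0 \<le> g a + g b"
proof (cases "a + b = 0")
  case True
  then have "a = 0" "b = 0" using a b by linarith+
  then show ?thesis by simp
next
  case False
  define s where "s = a + b"
  have s: "s < 0" using False a b unfolding s_def by simp
  define t where "t = a / s"
  have t0: "t \<ge> 0" and t1: "t \<le> 1" unfolding t_def s_def using a b s s_def
    by (auto simp: divide_simps)
  have ta: "t * s = a" unfolding t_def using s by simp
  have tb: "(1 - t) * s = b" unfolding t_def s_def using s s_def by (simp add: field_simps)
  have s_in: "s \<in> {..0}" and z_in: "(0::real) \<in> {..0}" using s by auto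
  have 1: "g ((1 - t) *\<^sub>R 0 + t *\<^sub>R s) \<ge> (1 - t) * g 0 + t * g s"
    using concave_onD[OF c t0 t1 z_in s_in] .
  have 2: "g ((1 - (1-t)) *\<^sub>R 0 + (1-t) *\<^sub>R s) \<ge> (1 - (1-t)) * g 0 + (1-t) * g s"
    using concave_onD[OF c _ _ z_in s_in, of "1-t"] t0 t1 by simp
  have "g a \<ge> (1 - t) * g 0 + t * g s" using 1 ta by simp
  moreover have "g b \<ge> t * g 0 + (1-t) * g s" using 2 tb by simp
  ultimately show ?thesis unfolding s_def[symmetric] by (simp add: algebra_simps)
qed

theorem mainTheorem4:
  fixes q :: nat
  assumes "q \<ge> 2"
  shows "concave_on {..0} (G q) \<and>
    (\<forall>\<epsilon> x :: real. 0 \<le> \<epsilon> \<and> \<epsilon> \<le> 1/2 \<and> 0 < x \<and> x \<le> 1 \<longrightarrow>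
       F q ((1 - 2*\<epsilon>) * x) * F q 1 \<le> F q (1 - 2*\<epsilon>) * F q x)"
proof -
  obtain n where qn: "q = Suc n" and n: "n \<ge> 1" using assms by (cases q) auto
  have C: "concave_on {..0} (G q)" unfolding qn using G_concave[OF n] .
  have expG: "exp (G q z) = F q (exp z)" if "z \<le> 0" for z
    unfolding G_def qn using F_pos[OF n, of "exp z"] that by simp
  have main: "F q ((1 - 2*\<epsilon>) * x) * F q 1 \<le> F q (1 - 2*\<epsilon>) * F q x"
    if e: "0 \<le> \<epsilon>" "\<epsilon> \<le> 1/2" and x: "0 < x" "x \<le> 1" for \<epsilon> x :: real
  proof (cases "\<epsilon> = 1/2")
    case True
    have "F q 0 = 0" unfolding F_def by simp
    moreover have "1 - 2*\<epsilon> = 0" using True by simp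
    ultimately show ?thesis by simp
  next
    case False
    define \<alpha> where "\<alpha> = 1 - 2*\<epsilon>"
    have al: "0 < \<alpha>" "\<alpha> \<le> 1" unfolding \<alpha>_def using e False by auto
    define a where "a = ln \<alpha>"
    define b where "b = ln x"
    have a: "a \<le> 0" and b: "b \<le> 0" unfolding a_def b_def using al x by auto
    have ea: "exp a = \<alpha>" and eb: "exp b = x" unfolding a_def b_def using al x by auto
    have eab: "exp (a+b) = \<alpha> * x" using ea eb by (simp add: exp_add)
    have "exp (G q (a+b) + G q 0) \<le> exp (G q a + G q b)"
      using G_superadd[OF C a b] by simp
    then have "exp (G q (a+b)) * exp (G q 0) \<le> exp (G q a) * exp (G q b)"
      by (simp add: exp_add)
    then show ?thesis unfolding \<alpha>_def[symmetric]
      using expG[of "a+b"] expG[of 0] expG[OF a] expG[OF b] a b eab ea eb by simp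
  qed
  show ?thesis using C main by blast
qed

end
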